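(* Let $d\geq1$, $T>0$ and $\xi=((s_i,t_i))_{1\leq i\leq n}$ with $s_i<t_i$, $[s_i,t_i]\subseteq[0,T]$ for all $i$ and $[s_i,t_i]\cap[s_j,t_j]=\emptyset$ for $i\neq j$. Then for every $u\in[0,\infty)^n$, \[\sigma_T^2(\xi,u)=1-\frac1T\sum_{i=1}^n\tau_i+\frac1T\sum_{i=1}^n\frac{\tau_i}{\tau_iu_i^2+1},\qquad\tau_i:=t_i-s_i.\]
   Context: $\mathcal W$ is the law of standard $d$-dimensional Brownian motion on $C([0,\infty),\mathbb R^d)$, $X_t(\mathbf x)=\mathbf x_t$, $X_{s,t}=X_t-X_s$. For $u\in[0,\infty)^n$, $\phi(\xi,u)=\mathbb E_{\mathcal W}[e^{-\sum_{i=1}^nu_i^2|X_{s_i,t_i}|^2/2}]$, $\mathbf P_{\xi,u}(\mathrm d\mathbf x)=\phi(\xi,u)^{-1}e^{-\sum_iu_i^2|\mathbf x_{t_i}-\mathbf x_{s_i}|^2/2}\mathcal W(\mathrm d\mathbf x)$, and $\sigma_T^2(\xi,u)=\frac1{dT}\mathbb E_{\mathbf P_{\xi,u}}[|X_T-X_0|^2]$. *)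

theory Defs
  imports "HOL-Probability.Probability"
begin

text \<open>Expectations under the Wiener
  measure W are expectations of functionals of such a process.\<close>

definition is_std_BM :: "'w measure \<Rightarrow> (real \<Rightarrow> 'w \<Rightarrow> 'a::euclidean_space) \<Rightarrow> bool" where
  "is_std_BM M B \<longleftrightarrow>
     prob_space M \<and>
     (\<forall>t\<ge>0. B t \<in> borel_measurable M) \<and>
     (\<forall>\<omega>\<in>space M. B 0 \<omega> = 0 \<and> continuous_on {0..} (\<lambda>t. B t \<omega>)) \<and>
     (\<forall>(ts::nat \<Rightarrow> real) k. 0 \<le> ts 0 \<and> (\<forall>m<k. ts m < ts (Suc m)) \<longrightarrow>
        prob_space.indep_vars M (\<lambda>_. borel)
          (\<lambda>(m, b) \<omega>. (B (ts (Suc m)) \<omega> - B (ts m) \<omega>) \<bullet> b) ({..<k} \<times> Basis) \<and>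
        (\<forall>m<k. \<forall>b\<in>Basis.
          distributed M lborel (\<lambda>\<omega>. (B (ts (Suc m)) \<omega> - B (ts m) \<omega>) \<bullet> b)
            (normal_density 0 (sqrt (ts (Suc m) - ts m)))))"

definition weight ::
  "(real \<Rightarrow> 'w \<Rightarrow> 'a::euclidean_space) \<Rightarrow> nat \<Rightarrow> (nat \<Rightarrow> real) \<Rightarrow> (nat \<Rightarrow> real)
     \<Rightarrow> (nat \<Rightarrow> real) \<Rightarrow> 'w \<Rightarrow> real" where
  "weight B n s t u \<omega> = exp (- (\<Sum>i<n. (u i)\<^sup>2 * (norm (B (t i) \<omega> - B (s i) \<omega>))\<^sup>2 / 2))"

definition phi ::
  "'w measure \<Rightarrow> (real \<Rightarrow> 'w \<Rightarrow> 'a::euclidean_space) \<Rightarrow> nat \<Rightarrow> (nat \<Rightarrow> real)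
     \<Rightarrow> (nat \<Rightarrow> real) \<Rightarrow> (nat \<Rightarrow> real) \<Rightarrow> real" where
  "phi M B n s t u = (\<integral>\<omega>. weight B n s t u \<omega> \<partial>M)"

text \<open>\<open>\<sigma>_T^2(\<xi>,u) = (1/(dT)) E_{P_{\<xi>,u}}[|X_T - X_0|^2]\<close>, where
  \<open>P_{\<xi>,u} = \<phi>^{-1} weight \<cdot> W\<close>.\<close>
definition sigma2 ::
  "'w measure \<Rightarrow> (real \<Rightarrow> 'w \<Rightarrow> 'a::euclidean_space) \<Rightarrow> real \<Rightarrow> nat \<Rightarrow> (nat \<Rightarrow> real)
     \<Rightarrow> (nat \<Rightarrow> real) \<Rightarrow> (nat \<Rightarrow> real) \<Rightarrow> real" where
  "sigma2 M B T n s t u =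
     1 / (real DIM('a) * T) *
       ((\<integral>\<omega>. (norm (B T \<omega> - B 0 \<omega>))\<^sup>2 * weight B n s t u \<omega> \<partial>M) / phi M B n s t u)"

end

theory Submission
  imports Defs
begin


lemma nd_exp:
  assumes s: "(\<sigma>::real) > 0" and c: "c \<ge> 0"
  shows "normal_density 0 \<sigma> x * exp (- (c * x\<^sup>2 / 2)) =
     (1 / sqrt (1 + c * \<sigma>\<^sup>2)) * normal_density 0 (\<sigma> / sqrt (1 + c * \<sigma>\<^sup>2)) x"
proof -
  define q where "q = 1 + c * \<sigma>\<^sup>2"
  have q: "q > 0" using s c unfolding q_def by (simp add: add_pos_nonneg)
  have sq: "(sqrt q)\<^sup>2 = q" using q by simp
  have e: "exp (- x\<^sup>2 / (2 * \<sigma>\<^sup>2)) * exp (- (c * x\<^sup>2 / 2)) = exp (- x\<^sup>2 / (2 * (\<sigma> / sqrt q)\<^sup>2))"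
    unfolding exp_add[symmetric] using s q
    by (simp add: power_divide sq q_def field_simps)
  have r: "sqrt (2 * pi * (\<sigma> / sqrt q)\<^sup>2) = sqrt (2 * pi * \<sigma>\<^sup>2) / sqrt q"
    using q by (simp add: power_divide sq real_sqrt_divide)
  show ?thesis unfolding q_def[symmetric] normal_density_def
    using q s e r by (simp add: field_simps)
qed

definition Ig :: "real \<Rightarrow> real \<Rightarrow> nat \<Rightarrow> real" where
  "Ig \<sigma> c p = (\<integral>x. normal_density 0 \<sigma> x * (x ^ p * exp (- (c * x\<^sup>2 / 2))) \<partial>lborel)"

lemma Ig_int:
  assumes s: "(\<sigma>::real) > 0" and c: "c \<ge> 0"
  shows "integrable lborel (\<lambda>x. normal_density 0 \<sigma> x * (x ^ p * exp (- (c * x\<^sup>2 / 2))))"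
    and "Ig \<sigma> c p = (1 / sqrt (1 + c * \<sigma>\<^sup>2)) *
            (\<integral>x. normal_density 0 (\<sigma> / sqrt (1 + c * \<sigma>\<^sup>2)) x * x ^ p \<partial>lborel)"
proof -
  have eq: "normal_density 0 \<sigma> x * (x ^ p * exp (- (c * x\<^sup>2 / 2))) =
     (1 / sqrt (1 + c * \<sigma>\<^sup>2)) * (normal_density 0 (\<sigma> / sqrt (1 + c * \<sigma>\<^sup>2)) x * (x - 0) ^ p)" for x
    using nd_exp[OF s c, of x] by (simp add: algebra_simps)
  show "integrable lborel (\<lambda>x. normal_density 0 \<sigma> x * (x ^ p * exp (- (c * x\<^sup>2 / 2))))"
  proof -
    have q: "1 + c * \<sigma>\<^sup>2 > 0" using s c by (simp add: add_pos_nonneg)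
    have s': "\<sigma> / sqrt (1 + c * \<sigma>\<^sup>2) > 0" using s q by simp
    show ?thesis unfolding eq by (intro integrable_mult_right integrable_normal_moment[OF s'])
  qed
  show "Ig \<sigma> c p = (1 / sqrt (1 + c * \<sigma>\<^sup>2)) *
            (\<integral>x. normal_density 0 (\<sigma> / sqrt (1 + c * \<sigma>\<^sup>2)) x * x ^ p \<partial>lborel)"
    unfolding Ig_def eq by simp
qed

lemma Ig_vals:
  assumes s: "(\<sigma>::real) > 0" and c: "c \<ge> 0"
  shows "Ig \<sigma> c 0 = 1 / sqrt (1 + c * \<sigma>\<^sup>2)"
    and "Ig \<sigma> c 1 = 0"
    and "Ig \<sigma> c 2 = (1 / sqrt (1 + c * \<sigma>\<^sup>2)) * (\<sigma>\<^sup>2 / (1 + c * \<sigma>\<^sup>2))"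
proof -
  have q: "1 + c * \<sigma>\<^sup>2 > 0" using s c by (simp add: add_pos_nonneg)
  have s': "\<sigma> / sqrt (1 + c * \<sigma>\<^sup>2) > 0" using s q by simp
  show "Ig \<sigma> c 0 = 1 / sqrt (1 + c * \<sigma>\<^sup>2)" using Ig_int(2)[OF s c, of 0] integral_normal_density[OF s'] by simp
  show "Ig \<sigma> c 1 = 0" using Ig_int(2)[OF s c, of 1]
      integral_normal_moment_odd[OF s', where k=0 and \<mu>=0] by simp
  have a: "Ig \<sigma> c 2 = (1 / sqrt (1 + c * \<sigma>\<^sup>2)) * (2 * \<sigma>\<^sup>2 / (2 + 2 * (c * \<sigma>\<^sup>2)))"
    using Ig_int(2)[OF s c, of 2]
      integral_normal_moment_even[OF s', where k=1 and \<mu>=0] q by (simp add: power_divide)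
  have b: "2 * \<sigma>\<^sup>2 / (2 + 2 * (c * \<sigma>\<^sup>2)) = \<sigma>\<^sup>2 / (1 + c * \<sigma>\<^sup>2)"
    using q by (simp add: field_simps)
  show "Ig \<sigma> c 2 = (1 / sqrt (1 + c * \<sigma>\<^sup>2)) * (\<sigma>\<^sup>2 / (1 + c * \<sigma>\<^sup>2))"
    using a b by simp
qed

lemma (in prob_space) gauss_prod:
  fixes Y :: "'j \<Rightarrow> 'a \<Rightarrow> real"
  assumes fin: "finite J" and ind: "indep_vars (\<lambda>_. borel) Y J"
    and dist: "\<And>j. j \<in> J \<Longrightarrow> distributed M lborel (Y j) (normal_density 0 (sg j))"
    and sg: "\<And>j. j \<in> J \<Longrightarrow> sg j > 0" and c: "\<And>j. j \<in> J \<Longrightarrow> cc j \<ge> 0"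
  shows "(\<integral>\<omega>. (\<Prod>j\<in>J. Y j \<omega> ^ p j * exp (- (cc j * (Y j \<omega>)\<^sup>2 / 2))) \<partial>M)
           = (\<Prod>j\<in>J. Ig (sg j) (cc j) (p j))"
proof -
  define h where "h j y = y ^ p j * exp (- (cc j * y\<^sup>2 / 2))" for j y
  have hm: "h j \<in> borel_measurable borel" for j unfolding h_def by measurable
  have hm': "h j \<in> borel_measurable lborel" for j unfolding h_def by measurable
  have ind2: "indep_vars (\<lambda>_. borel) (\<lambda>j \<omega>. h j (Y j \<omega>)) J"
    by (rule indep_vars_compose2[OF ind]) (simp add: hm)
  have int: "integrable M (\<lambda>\<omega>. h j (Y j \<omega>))" if j: "j \<in> J" for j
    using distributed_integrable[OF dist[OF j] hm'[of j]] Ig_int(1)[OF sg[OF j] c[OF j], of "p j"]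
    by (simp add: h_def)
  have val: "(\<integral>\<omega>. h j (Y j \<omega>) \<partial>M) = Ig (sg j) (cc j) (p j)" if j: "j \<in> J" for j
    using distributed_integral[OF dist[OF j] hm'[of j]] unfolding Ig_def h_def by simp
  have "(\<integral>\<omega>. (\<Prod>j\<in>J. h j (Y j \<omega>)) \<partial>M) = (\<Prod>j\<in>J. \<integral>\<omega>. h j (Y j \<omega>) \<partial>M)"
    by (rule indep_vars_lebesgue_integral[OF fin ind2 int])
  also have "\<dots> = (\<Prod>j\<in>J. Ig (sg j) (cc j) (p j))" by (rule prod.cong) (simp_all add: val)
  finally show ?thesis unfolding h_def .
qed

lemma (in prob_space) gauss_pair:
  fixes Y :: "'j \<Rightarrow> 'a \<Rightarrow> real"
  assumes fin: "finite J" and ind: "indep_vars (\<lambda>_. borel) Y J"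
    and dist: "\<And>j. j \<in> J \<Longrightarrow> distributed M lborel (Y j) (normal_density 0 (sg j))"
    and sg: "\<And>j. j \<in> J \<Longrightarrow> sg j > 0" and c: "\<And>j. j \<in> J \<Longrightarrow> cc j \<ge> 0"
    and a: "a \<in> J" and b: "b \<in> J"
  shows "(\<integral>\<omega>. Y a \<omega> * Y b \<omega> * (\<Prod>j\<in>J. exp (- (cc j * (Y j \<omega>)\<^sup>2 / 2))) \<partial>M)
    = (if a = b then (sg a)\<^sup>2 / (1 + cc a * (sg a)\<^sup>2) * (\<Prod>j\<in>J. Ig (sg j) (cc j) 0) else 0)"
proof -
  define p where "p j = (if j = a then 1 else 0) + (if j = b then 1 else (0::nat))" for j
  have pw: "Y a \<omega> * Y b \<omega> * (\<Prod>j\<in>J. exp (- (cc j * (Y j \<omega>)\<^sup>2 / 2)))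
     = (\<Prod>j\<in>J. Y j \<omega> ^ p j * exp (- (cc j * (Y j \<omega>)\<^sup>2 / 2)))" for \<omega>
  proof -
    have e1: "(\<Prod>j\<in>J. Y j \<omega> ^ (if j = a then 1 else 0)) = Y a \<omega>"
      using fin a by (simp add: if_distrib prod.delta cong: if_cong)
    have e2: "(\<Prod>j\<in>J. Y j \<omega> ^ (if j = b then 1 else 0)) = Y b \<omega>"
      using fin b by (simp add: if_distrib prod.delta cong: if_cong)
    have "(\<Prod>j\<in>J. Y j \<omega> ^ p j) = Y a \<omega> * Y b \<omega>"
      unfolding p_def power_add prod.distrib e1 e2 ..
    then show ?thesis by (simp add: prod.distrib)
  qed
  have "(\<integral>\<omega>. Y a \<omega> * Y b \<omega> * (\<Prod>j\<in>J. exp (- (cc j * (Y j \<omega>)\<^sup>2 / 2))) \<partial>M)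
     = (\<Prod>j\<in>J. Ig (sg j) (cc j) (p j))"
    unfolding pw by (rule gauss_prod[OF fin ind dist sg c])
  also have "\<dots> = (if a = b then (sg a)\<^sup>2 / (1 + cc a * (sg a)\<^sup>2) * (\<Prod>j\<in>J. Ig (sg j) (cc j) 0) else 0)"
  proof (cases "a = b")
    case True
    have "(\<Prod>j\<in>J. Ig (sg j) (cc j) (p j)) = Ig (sg a) (cc a) (p a) * (\<Prod>j\<in>J-{a}. Ig (sg j) (cc j) (p j))"
      using fin a by (simp add: prod.remove)
    also have "(\<Prod>j\<in>J-{a}. Ig (sg j) (cc j) (p j)) = (\<Prod>j\<in>J-{a}. Ig (sg j) (cc j) 0)"
      by (rule prod.cong) (auto simp: p_def True)
    also have "Ig (sg a) (cc a) (p a) = (sg a)\<^sup>2 / (1 + cc a * (sg a)\<^sup>2) * Ig (sg a) (cc a) 0"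
    proof -
      have pa: "p a = 2" using True by (simp add: p_def)
      show ?thesis unfolding pa Ig_vals(1,3)[OF sg[OF a] c[OF a]] by simp
    qed
    also have "(sg a)\<^sup>2 / (1 + cc a * (sg a)\<^sup>2) * Ig (sg a) (cc a) 0 * (\<Prod>j\<in>J-{a}. Ig (sg j) (cc j) 0)
       = (sg a)\<^sup>2 / (1 + cc a * (sg a)\<^sup>2) * (\<Prod>j\<in>J. Ig (sg j) (cc j) 0)"
      using fin a by (simp add: prod.remove)
    finally show ?thesis using True by simp
  next
    case False
    have "Ig (sg a) (cc a) (p a) = 0" using Ig_vals[OF sg[OF a] c[OF a]] False by (simp add: p_def)
    then show ?thesis using False fin a by (auto intro: prod_zero)
  qed
  finally show ?thesis .
qed

lemma (in prob_space) gauss_prod_int: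
  fixes Y :: "'j \<Rightarrow> 'a \<Rightarrow> real"
  assumes fin: "finite J" and ind: "indep_vars (\<lambda>_. borel) Y J"
    and dist: "\<And>j. j \<in> J \<Longrightarrow> distributed M lborel (Y j) (normal_density 0 (sg j))"
    and sg: "\<And>j. j \<in> J \<Longrightarrow> sg j > 0" and c: "\<And>j. j \<in> J \<Longrightarrow> cc j \<ge> 0"
  shows "integrable M (\<lambda>\<omega>. (\<Prod>j\<in>J. Y j \<omega> ^ p j * exp (- (cc j * (Y j \<omega>)\<^sup>2 / 2))))"
proof -
  define h where "h j y = y ^ p j * exp (- (cc j * y\<^sup>2 / 2))" for j y
  have hm: "h j \<in> borel_measurable borel" for j unfolding h_def by measurable
  have hm': "h j \<in> borel_measurable lborel" for j unfolding h_def by measurable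
  have ind2: "indep_vars (\<lambda>_. borel) (\<lambda>j \<omega>. h j (Y j \<omega>)) J"
    by (rule indep_vars_compose2[OF ind]) (simp add: hm)
  have int: "integrable M (\<lambda>\<omega>. h j (Y j \<omega>))" if j: "j \<in> J" for j
    using distributed_integrable[OF dist[OF j] hm'[of j]] Ig_int(1)[OF sg[OF j] c[OF j], of "p j"]
    by (simp add: h_def)
  show ?thesis using indep_vars_integrable[OF fin ind2 int] unfolding h_def .
qed

lemma prod_pw:
  fixes Y :: "'j \<Rightarrow> real"
  assumes fin: "finite J" and a: "a \<in> J" and b: "b \<in> J"
  shows "Y a * Y b * (\<Prod>j\<in>J. exp (- (cc j * (Y j)\<^sup>2 / 2)))
     = (\<Prod>j\<in>J. Y j ^ ((if j = a then 1 else 0) + (if j = b then 1 else (0::nat))) * exp (- (cc j * (Y j)\<^sup>2 / 2)))"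
proof -
  have e1: "(\<Prod>j\<in>J. Y j ^ (if j = a then 1 else 0)) = Y a"
    using fin a by (simp add: if_distrib prod.delta cong: if_cong)
  have e2: "(\<Prod>j\<in>J. Y j ^ (if j = b then 1 else 0)) = Y b"
    using fin b by (simp add: if_distrib prod.delta cong: if_cong)
  have "(\<Prod>j\<in>J. Y j ^ ((if j = a then 1 else 0) + (if j = b then 1 else (0::nat)))) = Y a * Y b"
    unfolding power_add prod.distrib e1 e2 ..
  then show ?thesis by (simp add: prod.distrib)
qed

lemma (in prob_space) gauss_pair_int:
  fixes Y :: "'j \<Rightarrow> 'a \<Rightarrow> real"
  assumes fin: "finite J" and ind: "indep_vars (\<lambda>_. borel) Y J"
    and dist: "\<And>j. j \<in> J \<Longrightarrow> distributed M lborel (Y j) (normal_density 0 (sg j))"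
    and sg: "\<And>j. j \<in> J \<Longrightarrow> sg j > 0" and c: "\<And>j. j \<in> J \<Longrightarrow> cc j \<ge> 0"
    and a: "a \<in> J" and b: "b \<in> J"
  shows "integrable M (\<lambda>\<omega>. Y a \<omega> * Y b \<omega> * (\<Prod>j\<in>J. exp (- (cc j * (Y j \<omega>)\<^sup>2 / 2))))"
proof -
  have e: "(\<lambda>\<omega>. Y a \<omega> * Y b \<omega> * (\<Prod>j\<in>J. exp (- (cc j * (Y j \<omega>)\<^sup>2 / 2)))) =
    (\<lambda>\<omega>. (\<Prod>j\<in>J. Y j \<omega> ^ ((if j = a then 1 else 0) + (if j = b then 1 else (0::nat))) * exp (- (cc j * (Y j \<omega>)\<^sup>2 / 2))))"
    by (rule ext, rule prod_pw[OF fin a b])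
  show ?thesis unfolding e by (rule gauss_prod_int[OF fin ind dist sg c])
qed

lemma (in prob_space) gauss_0:
  fixes Y :: "'j \<Rightarrow> 'a \<Rightarrow> real"
  assumes fin: "finite J" and ind: "indep_vars (\<lambda>_. borel) Y J"
    and dist: "\<And>j. j \<in> J \<Longrightarrow> distributed M lborel (Y j) (normal_density 0 (sg j))"
    and sg: "\<And>j. j \<in> J \<Longrightarrow> sg j > 0" and c: "\<And>j. j \<in> J \<Longrightarrow> cc j \<ge> 0"
  shows "(\<integral>\<omega>. (\<Prod>j\<in>J. exp (- (cc j * (Y j \<omega>)\<^sup>2 / 2))) \<partial>M) = (\<Prod>j\<in>J. Ig (sg j) (cc j) 0)"
  using gauss_prod[OF fin ind dist sg c, where p="\<lambda>_. 0"] by simp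

lemma Ig0_pos: "(\<sigma>::real) > 0 \<Longrightarrow> c \<ge> 0 \<Longrightarrow> Ig \<sigma> c 0 > 0"
  using Ig_vals(1)[of \<sigma> c] by (simp add: add_pos_nonneg)



lemma integral_sum_gen:
  fixes f :: "'i \<Rightarrow> 'm \<Rightarrow> real"
  assumes "\<And>i. i \<in> I \<Longrightarrow> integrable M (f i)"
  shows "(\<integral>\<omega>. (\<Sum>i\<in>I. f i \<omega>) \<partial>M) = (\<Sum>i\<in>I. \<integral>\<omega>. f i \<omega> \<partial>M)"
  using Bochner_Integration.integral_sum[OF assms] .

theorem lemma2:
  fixes M :: "'w measure" and B :: "real \<Rightarrow> 'w \<Rightarrow> 'a::euclidean_space"
    and T :: real and n :: nat and s t u :: "nat \<Rightarrow> real"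
  assumes BM: "is_std_BM M B"
    and T: "T > 0"
    and st: "\<And>i. i < n \<Longrightarrow> s i < t i \<and> 0 \<le> s i \<and> t i \<le> T"
    and disj: "\<And>i j. i < n \<Longrightarrow> j < n \<Longrightarrow> i \<noteq> j \<Longrightarrow> {s i..t i} \<inter> {s j..t j} = {}"
    and u: "\<And>i. i < n \<Longrightarrow> u i \<ge> 0"
  shows "sigma2 M B T n s t u =
           1 - (1 / T) * (\<Sum>i<n. t i - s i)
             + (1 / T) * (\<Sum>i<n. (t i - s i) / ((t i - s i) * (u i)\<^sup>2 + 1))"
proof -
  have Mp: "prob_space M" using BM unfolding is_std_BM_def by blast
  interpret prob_space M by (rule Mp)
  have B0: "B 0 \<omega> = 0" if "\<omega> \<in> space M" for \<omega> using BM that unfolding is_std_BM_def by blast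
  define P where "P = {0, T} \<union> s ` {..<n} \<union> t ` {..<n}"
  define L where "L = sorted_list_of_set P"
  define ts where "ts = (\<lambda>m. L ! m)"
  define k where "k = length L - 1"
  have finP: "finite P" unfolding P_def by simp
  have setL: "set L = P" unfolding L_def using finP by simp
  have sortL: "sorted_wrt (<) L" unfolding L_def by simp
  have distL: "distinct L" unfolding L_def by simp
  have Pb: "0 \<le> x \<and> x \<le> T" if "x \<in> P" for x
    using that st T unfolding P_def by (force intro: less_imp_le order.trans)
  have Lmono: "L ! i < L ! j" if "i < j" "j < length L" for i j
    using sortL that sorted_wrt_nth_less by blast
  have Lmono': "L ! i \<le> L ! j" if "i \<le> j" "j < length L" for i j
    using Lmono[of i j] that by (cases "i = j") auto
  have lenL: "length L = card P" using distL setL distinct_card by fastforce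
  have "card {0, T} \<le> card P" using finP unfolding P_def by (intro card_mono) auto
  then have len2: "length L \<ge> 2" using T lenL by simp
  have kL: "Suc k = length L" unfolding k_def using len2 by simp
  have inL: "\<exists>j<length L. L ! j = x" if "x \<in> P" for x
    using that setL by (metis in_set_conv_nth)
  have ts0: "ts 0 = 0"
  proof -
    obtain j where j: "j < length L" "L ! j = 0" using inL[of 0] unfolding P_def by auto
    have "L ! 0 \<le> 0" using Lmono'[of 0 j] j by simp
    moreover have "L ! 0 \<in> P" using setL len2 by (metis nth_mem order.strict_trans2 pos2)
    ultimately show ?thesis unfolding ts_def using Pb by force
  qed
  have tsk: "ts k = T"
  proof -
    obtain j where j: "j < length L" "L ! j = T" using inL[of T] unfolding P_def by auto
    have "T \<le> L ! k" using Lmono'[of j k] j kL by simp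
    moreover have "L ! k \<in> P" using setL kL by (metis nth_mem lessI)
    ultimately show ?thesis unfolding ts_def using Pb by force
  qed
  have tsinc: "ts m < ts (Suc m)" if "m < k" for m
    unfolding ts_def using Lmono[of m "Suc m"] that kL by simp
  have cellex: "\<exists>m. m < k \<and> ts m = s i \<and> ts (Suc m) = t i" if i: "i < n" for i
  proof -
    obtain m where m: "m < length L" "L ! m = s i" using inL[of "s i"] i unfolding P_def by auto
    obtain m' where m': "m' < length L" "L ! m' = t i" using inL[of "t i"] i unfolding P_def by auto
    have mm: "m < m'"
    proof (rule ccontr)
      assume "\<not> m < m'"
      then have "L ! m' \<le> L ! m" using Lmono'[of m' m] m by simp
      then show False using st[OF i] m m' by simp
    qed
    have "m' = Suc m"
    proof (rule ccontr)
      assume "m' \<noteq> Suc m"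
      then have sm: "Suc m < m'" using mm by simp
      define x where "x = L ! Suc m"
      have x1: "s i < x" unfolding x_def using Lmono[of m "Suc m"] sm m' m by simp
      have x2: "x < t i" unfolding x_def using Lmono[of "Suc m" m'] sm m' by simp
      have xP: "x \<in> P" unfolding x_def using setL sm m' by (metis nth_mem order.strict_trans)
      show False
      proof -
        { assume "x = 0" then have False using x1 st[OF i] by simp }
        moreover { assume "x = T" then have False using x2 st[OF i] by simp }
        moreover { fix j assume j: "j < n" "x = s j"
          then have "j \<noteq> i" using x1 by auto
          moreover have "x \<in> {s i..t i} \<inter> {s j..t j}" using x1 x2 j st[OF j(1)] by auto
          ultimately have False using disj[OF i j(1)] by auto }
        moreover { fix j assume j: "j < n" "x = t j"
          then have "j \<noteq> i" using x2 by auto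
          moreover have "x \<in> {s i..t i} \<inter> {s j..t j}" using x1 x2 j st[OF j(1)] by auto
          ultimately have False using disj[OF i j(1)] by auto }
        ultimately show False using xP unfolding P_def by auto
      qed
    qed
    then show ?thesis using m m' kL unfolding ts_def by (intro exI[of _ m]) auto
  qed
  then obtain cell where cell: "\<And>i. i < n \<Longrightarrow> cell i < k \<and> ts (cell i) = s i \<and> ts (Suc (cell i)) = t i"
    by metis
  have inj: "inj_on cell {..<n}"
  proof (rule inj_onI)
    fix i j assume i: "i \<in> {..<n}" and j: "j \<in> {..<n}" and e: "cell i = cell j"
    then have "s i = s j" using cell[of i] cell[of j] by auto
    then have "s i \<in> {s i..t i} \<inter> {s j..t j}" using st[of i] st[of j] i j by auto
    then show "i = j" using disj[of i j] i j by auto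
  qed
  have grid: "indep_vars (\<lambda>_. borel)
          (\<lambda>(m, b) \<omega>. (B (ts (Suc m)) \<omega> - B (ts m) \<omega>) \<bullet> b) ({..<k} \<times> Basis) \<and>
        (\<forall>m<k. \<forall>b\<in>Basis.
          distributed M lborel (\<lambda>\<omega>. (B (ts (Suc m)) \<omega> - B (ts m) \<omega>) \<bullet> b)
            (normal_density 0 (sqrt (ts (Suc m) - ts m))))"
  proof -
    have "\<forall>(ts::nat \<Rightarrow> real) k. 0 \<le> ts 0 \<and> (\<forall>m<k. ts m < ts (Suc m)) \<longrightarrow>
        indep_vars (\<lambda>_. borel)
          (\<lambda>(m, b) \<omega>. (B (ts (Suc m)) \<omega> - B (ts m) \<omega>) \<bullet> b) ({..<k} \<times> (Basis::'a set)) \<and>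
        (\<forall>m<k. \<forall>b\<in>(Basis::'a set).
          distributed M lborel (\<lambda>\<omega>. (B (ts (Suc m)) \<omega> - B (ts m) \<omega>) \<bullet> b)
            (normal_density 0 (sqrt (ts (Suc m) - ts m))))"
      using BM unfolding is_std_BM_def by blast
    then have "0 \<le> ts 0 \<and> (\<forall>m<k. ts m < ts (Suc m)) \<longrightarrow> ?thesis"
      by (elim allE[of _ ts] allE[of _ k])
    then show ?thesis using ts0 tsinc by simp
  qed
  define J where "J = {..<k} \<times> (Basis::'a set)"
  define Y where "Y = (\<lambda>(m, b) \<omega>. (B (ts (Suc m)) \<omega> - B (ts m) \<omega>) \<bullet> (b::'a))"
  define \<delta> where "\<delta> m = ts (Suc m) - ts m" for m
  define sg where "sg = (\<lambda>j::nat \<times> 'a. sqrt (\<delta> (fst j)))"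
  define c where "c m = (\<Sum>i\<in>{i\<in>{..<n}. cell i = m}. (u i)\<^sup>2)" for m
  define cc where "cc = (\<lambda>j::nat \<times> 'a. c (fst j))"
  define G where "G \<omega> = (\<Prod>j\<in>J. exp (- (cc j * (Y j \<omega>)\<^sup>2 / 2)))" for \<omega>
  have finJ: "finite J" unfolding J_def by simp
  have ind: "indep_vars (\<lambda>_. borel) Y J" using grid unfolding Y_def J_def by simp
  have dist: "distributed M lborel (Y j) (normal_density 0 (sg j))" if "j \<in> J" for j
    using grid that unfolding Y_def J_def sg_def \<delta>_def by (cases j) auto
  have \<delta>pos: "\<delta> m > 0" if "m < k" for m using tsinc[OF that] unfolding \<delta>_def by simp
  have sgpos: "sg j > 0" if "j \<in> J" for j using \<delta>pos that unfolding sg_def J_def by auto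
  have cnn: "c m \<ge> 0" for m unfolding c_def by (intro sum_nonneg) auto
  have ccnn: "cc j \<ge> 0" for j unfolding cc_def using cnn by simp
  define \<Phi> where "\<Phi> = (\<Prod>j\<in>J. Ig (sg j) (cc j) 0)"
  have \<Phi>pos: "\<Phi> > 0" unfolding \<Phi>_def using Ig0_pos sgpos ccnn by (intro prod_pos) auto
  have intG: "(\<integral>\<omega>. G \<omega> \<partial>M) = \<Phi>" unfolding G_def \<Phi>_def
    by (rule gauss_0[OF finJ ind dist sgpos ccnn])
  define D where "D m \<omega> = B (ts (Suc m)) \<omega> - B (ts m) \<omega>" for m \<omega>
  have YD: "Y (m, b) \<omega> = D m \<omega> \<bullet> b" for m b \<omega> unfolding Y_def D_def by simp
  have nsq: "(norm (x::'a))\<^sup>2 = (\<Sum>b\<in>Basis. (x \<bullet> b) * (x \<bullet> b))" for x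
    unfolding power2_norm_eq_inner by (rule euclidean_inner)
  have W: "weight B n s t u \<omega> = G \<omega>" for \<omega>
  proof -
    have "(\<Sum>j\<in>J. cc j * (Y j \<omega>)\<^sup>2 / 2) = (\<Sum>m<k. \<Sum>b\<in>Basis. c m * (D m \<omega> \<bullet> b)\<^sup>2 / 2)"
      unfolding J_def sum.cartesian_product by (rule sum.cong) (auto simp: cc_def YD)
    also have "\<dots> = (\<Sum>m<k. c m * (norm (D m \<omega>))\<^sup>2 / 2)"
      unfolding nsq by (simp add: sum_distrib_left sum_divide_distrib power2_eq_square)
    also have "\<dots> = (\<Sum>m<k. \<Sum>i\<in>{i\<in>{..<n}. cell i = m}. (u i)\<^sup>2 * (norm (D (cell i) \<omega>))\<^sup>2 / 2)"
      unfolding c_def by (simp add: sum_distrib_right sum_divide_distrib)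
    also have "\<dots> = (\<Sum>i<n. (u i)\<^sup>2 * (norm (D (cell i) \<omega>))\<^sup>2 / 2)"
      by (rule sum.group) (use cell in auto)
    also have "\<dots> = (\<Sum>i<n. (u i)\<^sup>2 * (norm (B (t i) \<omega> - B (s i) \<omega>))\<^sup>2 / 2)"
      by (rule sum.cong) (use cell in \<open>auto simp: D_def\<close>)
    finally show ?thesis unfolding weight_def G_def
      by (simp add: exp_sum[OF finJ, symmetric] sum_negf)
  qed
  have N: "(norm (B T \<omega> - B 0 \<omega>))\<^sup>2 = (\<Sum>b\<in>Basis. \<Sum>m<k. \<Sum>m'<k. Y (m, b) \<omega> * Y (m', b) \<omega>)" for \<omega>
  proof -
    have "B T \<omega> - B 0 \<omega> = (\<Sum>m<k. D m \<omega>)"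
      unfolding D_def using sum_lessThan_telescope[of "\<lambda>m. B (ts m) \<omega>" k] tsk ts0 by simp
    then show ?thesis unfolding nsq
      by (simp add: inner_sum_left YD sum_product)
  qed
  define r where "r m = \<delta> m / (1 + c m * \<delta> m)" for m
  have pair: "(\<integral>\<omega>. Y (m, b) \<omega> * Y (m', b) \<omega> * G \<omega> \<partial>M) = (if m = m' then r m * \<Phi> else 0)"
    if "m < k" "m' < k" "b \<in> Basis" for m m' b
  proof -
    have "(\<integral>\<omega>. Y (m, b) \<omega> * Y (m', b) \<omega> * G \<omega> \<partial>M) =
       (if (m, b) = (m', b) then (sg (m, b))\<^sup>2 / (1 + cc (m, b) * (sg (m, b))\<^sup>2) * \<Phi> else 0)"
      unfolding G_def \<Phi>_def
      by (rule gauss_pair[OF finJ ind dist sgpos ccnn]) (use that in \<open>auto simp: J_def\<close>)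
    moreover have "(sqrt (\<delta> m))\<^sup>2 = \<delta> m" using \<delta>pos[OF that(1)] by simp
    ultimately show ?thesis by (auto simp: r_def sg_def cc_def)
  qed
  have pint: "integrable M (\<lambda>\<omega>. Y (m, b) \<omega> * Y (m', b) \<omega> * G \<omega>)"
    if "m < k" "m' < k" "b \<in> Basis" for m m' b
    unfolding G_def
    by (rule gauss_pair_int[OF finJ ind dist sgpos ccnn]) (use that in \<open>auto simp: J_def\<close>)
  have pint2: "integrable M (\<lambda>\<omega>. \<Sum>m'<k. Y (m, b) \<omega> * Y (m', b) \<omega> * G \<omega>)"
    if "m < k" "b \<in> Basis" for m b
    by (rule Bochner_Integration.integrable_sum) (rule pint, use that in auto)
  have pint3: "integrable M (\<lambda>\<omega>. \<Sum>m<k. \<Sum>m'<k. Y (m, b) \<omega> * Y (m', b) \<omega> * G \<omega>)"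
    if "b \<in> Basis" for b
    by (rule Bochner_Integration.integrable_sum) (rule pint2, use that in auto)
  have main: "(\<integral>\<omega>. (norm (B T \<omega> - B 0 \<omega>))\<^sup>2 * weight B n s t u \<omega> \<partial>M)
      = real DIM('a) * \<Phi> * (\<Sum>m<k. r m)"
  proof -
    have "(\<integral>\<omega>. (norm (B T \<omega> - B 0 \<omega>))\<^sup>2 * weight B n s t u \<omega> \<partial>M)
       = (\<integral>\<omega>. (\<Sum>b\<in>Basis. \<Sum>m<k. \<Sum>m'<k. Y (m, b) \<omega> * Y (m', b) \<omega> * G \<omega>) \<partial>M)"
      unfolding N W by (simp add: sum_distrib_right)
    also have "\<dots> = (\<Sum>b\<in>Basis. (\<integral>\<omega>. (\<Sum>m<k. \<Sum>m'<k. Y (m, b) \<omega> * Y (m', b) \<omega> * G \<omega>) \<partial>M))"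
      by (rule integral_sum_gen[where f="\<lambda>b \<omega>. \<Sum>m<k. \<Sum>m'<k. Y (m, b) \<omega> * Y (m', b) \<omega> * G \<omega>"])
         (rule pint3)
    also have "\<dots> = (\<Sum>b\<in>Basis. \<Sum>m<k. (\<integral>\<omega>. (\<Sum>m'<k. Y (m, b) \<omega> * Y (m', b) \<omega> * G \<omega>) \<partial>M))"
    proof (rule sum.cong[OF refl])
      fix b :: 'a assume bB: "b \<in> Basis"
      show "(\<integral>\<omega>. (\<Sum>m<k. \<Sum>m'<k. Y (m, b) \<omega> * Y (m', b) \<omega> * G \<omega>) \<partial>M) =
          (\<Sum>m<k. (\<integral>\<omega>. (\<Sum>m'<k. Y (m, b) \<omega> * Y (m', b) \<omega> * G \<omega>) \<partial>M))"
        by (rule integral_sum_gen[where f="\<lambda>m \<omega>. \<Sum>m'<k. Y (m, b) \<omega> * Y (m', b) \<omega> * G \<omega>"])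
           (rule pint2, use bB in auto)
    qed
    also have "\<dots> = (\<Sum>b\<in>Basis. \<Sum>m<k. \<Sum>m'<k. (\<integral>\<omega>. Y (m, b) \<omega> * Y (m', b) \<omega> * G \<omega> \<partial>M))"
    proof (intro sum.cong[OF refl])
      fix b :: 'a and m assume bm: "b \<in> Basis" "m \<in> {..<k}"
      show "(\<integral>\<omega>. (\<Sum>m'<k. Y (m, b) \<omega> * Y (m', b) \<omega> * G \<omega>) \<partial>M) =
          (\<Sum>m'<k. (\<integral>\<omega>. Y (m, b) \<omega> * Y (m', b) \<omega> * G \<omega> \<partial>M))"
        by (rule integral_sum_gen[where f="\<lambda>m' \<omega>. Y (m, b) \<omega> * Y (m', b) \<omega> * G \<omega>"])
           (rule pint, use bm in auto)
    qed
    also have "\<dots> = (\<Sum>b\<in>(Basis::'a set). \<Sum>m<k. \<Sum>m'<k. (if m = m' then r m * \<Phi> else 0))"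
      using pair by (intro sum.cong refl) auto
    also have "\<dots> = (\<Sum>b\<in>(Basis::'a set). \<Sum>m<k. r m * \<Phi>)"
      by simp
    also have "\<dots> = real DIM('a) * \<Phi> * (\<Sum>m<k. r m)"
      by (simp add: sum_distrib_left sum_distrib_right mult_ac)
    finally show ?thesis .
  qed
  have phiv: "phi M B n s t u = \<Phi>" unfolding phi_def W using intG .
  have Rv: "(\<Sum>m<k. r m) = T - (\<Sum>i<n. t i - s i) + (\<Sum>i<n. (t i - s i) / ((t i - s i) * (u i)\<^sup>2 + 1))"
  proof -
    have sd: "(\<Sum>m<k. \<delta> m) = T" unfolding \<delta>_def using sum_lessThan_telescope[of ts k] tsk ts0 by simp
    define f where "f m = r m - \<delta> m" for m
    have f0: "f m = 0" if "m \<notin> cell ` {..<n}" for m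
    proof -
      have "{i\<in>{..<n}. cell i = m} = {}" using that by auto
      then have "c m = 0" unfolding c_def by (metis sum.empty)
      then show ?thesis unfolding f_def r_def by simp
    qed
    have fc: "f (cell i) = (t i - s i) / ((t i - s i) * (u i)\<^sup>2 + 1) - (t i - s i)" if i: "i < n" for i
    proof -
      have "{i'\<in>{..<n}. cell i' = cell i} = {i}" using inj i by (auto dest: inj_onD)
      then have c1: "c (cell i) = (u i)\<^sup>2" unfolding c_def by simp
      have d1: "\<delta> (cell i) = t i - s i" using cell[OF i] unfolding \<delta>_def by simp
      have e: "1 + (u i)\<^sup>2 * (t i - s i) = (t i - s i) * (u i)\<^sup>2 + 1" by (simp add: ac_simps)
      show ?thesis unfolding f_def r_def c1 d1 e ..
    qed
    have "(\<Sum>m<k. f m) = (\<Sum>m\<in>cell ` {..<n}. f m)"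
      by (rule sum.mono_neutral_right) (use cell f0 in auto)
    also have "\<dots> = (\<Sum>i<n. f (cell i))" by (simp add: sum.reindex[OF inj])
    also have "\<dots> = (\<Sum>i<n. (t i - s i) / ((t i - s i) * (u i)\<^sup>2 + 1) - (t i - s i))"
      by (rule sum.cong) (simp_all add: fc)
    finally have fs: "(\<Sum>m<k. f m) = (\<Sum>i<n. (t i - s i) / ((t i - s i) * (u i)\<^sup>2 + 1) - (t i - s i))" .
    have "(\<Sum>m<k. r m) = (\<Sum>m<k. \<delta> m) + (\<Sum>m<k. f m)"
      unfolding f_def by (simp add: sum_subtractf)
    then show ?thesis using sd fs by (simp add: sum_subtractf)
  qed
  have dpos: "real DIM('a) > 0" by simp
  show ?thesis
    unfolding sigma2_def main phiv Rv using \<Phi>pos T dpos by (simp add: field_simps)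
qed
end
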